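(* Let $p$ be a binary word of length $l$ all of whose runs have size at least $2$. Then $p$ has an internal zero at $n$ for every $n\ge l+1$.
   Context: $c_p(w)$ is the number of occurrences of $p$ as a (not necessarily consecutive) subsequence of $w$; $B_{n,p}(k)$ is the number of binary words of length $n$ with $c_p(w)=k$. A run is a maximal block of consecutive equal letters; its size is its length. $p$ has an internal zero at $n$ if there exist $0\le k_1<k_2<k_3$ with $B_{n,p}(k_1)\ne0$, $B_{n,p}(k_2)=0$, $B_{n,p}(k_3)\ne0$. *)

theory Defs
  imports Main
begin

definition occ :: "bool list \<Rightarrow> bool list \<Rightarrow> nat" where
  "occ p w = card {I. I \<subseteq> {..<length w} \<and> card I = length p \<and> nths w I = p}"

definition B :: "nat \<Rightarrow> bool list \<Rightarrow> nat \<Rightarrow> nat" where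
  "B n p k = card {w :: bool list. length w = n \<and> occ p w = k}"

definition is_run :: "bool list \<Rightarrow> nat \<Rightarrow> nat \<Rightarrow> bool" where
  "is_run p i j \<longleftrightarrow> i < j \<and> j \<le> length p \<and> (\<forall>m. i \<le> m \<and> m < j \<longrightarrow> p ! m = p ! i)
     \<and> (i = 0 \<or> p ! (i - 1) \<noteq> p ! i) \<and> (j = length p \<or> p ! j \<noteq> p ! i)"

definition internal_zero :: "bool list \<Rightarrow> nat \<Rightarrow> bool" where
  "internal_zero p n \<longleftrightarrow> (\<exists>k1 k2 k3. k1 < k2 \<and> k2 < k3 \<and>
     B n p k1 \<noteq> 0 \<and> B n p k2 = 0 \<and> B n p k3 \<noteq> 0)"

end

theory Submission
  imports Defs
begin

definition OL :: "bool list \<Rightarrow> bool list \<Rightarrow> nat list set" where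
  "OL p w = {xs. sorted_wrt (<) xs \<and> set xs \<subseteq> {..<length w} \<and> map ((!) w) xs = p}"

lemma nths_sorted:
  assumes "I \<subseteq> {..<length w}"
  shows "nths w I = map ((!) w) (sorted_list_of_set I)"
proof -
  have fin: "finite I" using assms finite_subset by blast
  have "w = map ((!) w) [0..<length w]" by (simp add: map_nth)
  then have "nths w I = map ((!) w) (nths [0..<length w] I)"
    by (metis nths_map)
  moreover have "nths [0..<length w] I = sorted_list_of_set I"
  proof (rule sorted_distinct_set_unique)
    show "sorted (nths [0..<length w] I)" by (simp add: sorted_nths)
    show "distinct (nths [0..<length w] I)" by simp
    show "sorted (sorted_list_of_set I)" by simp
    show "distinct (sorted_list_of_set I)" by simp
    show "set (nths [0..<length w] I) = set (sorted_list_of_set I)"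
      using assms fin by (force simp: set_nths)
  qed
  ultimately show ?thesis by simp
qed

lemma OL_fin: "finite (OL p w)"
proof -
  have "OL p w \<subseteq> {xs. set xs \<subseteq> {..<length w} \<and> length xs = length p}"
    unfolding OL_def by auto
  moreover have "finite {xs. set xs \<subseteq> {..<length w} \<and> length xs = length p}"
    by (rule finite_lists_length_eq) simp
  ultimately show ?thesis by (rule finite_subset)
qed

lemma occ_eq: "occ p w = card (OL p w)"
proof -
  have eq: "{I. I \<subseteq> {..<length w} \<and> card I = length p \<and> nths w I = p} = set ` OL p w"
  proof
    show "{I. I \<subseteq> {..<length w} \<and> card I = length p \<and> nths w I = p} \<subseteq> set ` OL p w"
    proof
      fix I assume "I \<in> {I. I \<subseteq> {..<length w} \<and> card I = length p \<and> nths w I = p}"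
      then have I: "I \<subseteq> {..<length w}" "nths w I = p" by auto
      have fin: "finite I" using I finite_subset by blast
      have "sorted_list_of_set I \<in> OL p w"
        using I fin nths_sorted[OF I(1)] by (auto simp: OL_def)
      moreover have "I = set (sorted_list_of_set I)" using fin by simp
      ultimately show "I \<in> set ` OL p w" by blast
    qed
  next
    show "set ` OL p w \<subseteq> {I. I \<subseteq> {..<length w} \<and> card I = length p \<and> nths w I = p}"
    proof
      fix I assume "I \<in> set ` OL p w"
      then obtain xs where xs: "xs \<in> OL p w" "I = set xs" by blast
      have s: "sorted_wrt (<) xs" "set xs \<subseteq> {..<length w}" "map ((!) w) xs = p"
        using xs by (auto simp: OL_def)
      have d: "distinct xs" "sorted xs" using s(1) by (auto simp: strict_sorted_iff)
      have "sorted_list_of_set (set xs) = xs"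
        using d by (simp add: sorted_list_of_set.idem_if_sorted_distinct)
      then have "nths w I = p" using nths_sorted[OF s(2)] s xs by simp
      moreover have "card I = length p" using d s xs distinct_card by fastforce
      ultimately show "I \<in> {I. I \<subseteq> {..<length w} \<and> card I = length p \<and> nths w I = p}"
        using s xs by auto
    qed
  qed
  have inj: "inj_on set (OL p w)"
  proof (rule inj_onI)
    fix xs ys assume "xs \<in> OL p w" "ys \<in> OL p w" "set xs = set ys"
    then show "xs = ys"
      by (auto simp: OL_def strict_sorted_iff intro: sorted_distinct_set_unique)
  qed
  show ?thesis unfolding occ_def eq using card_image[OF inj] by simp
qed

lemma OL_intro:
  assumes "length zs = length p"
    and "\<forall>i j. i < j \<and> j < length p \<longrightarrow> zs ! i < zs ! j"
    and "\<forall>i < length p. zs ! i < length w \<and> w ! (zs ! i) = p ! i"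
  shows "zs \<in> OL p w"
  unfolding OL_def
proof (intro CollectI conjI)
  show "sorted_wrt (<) zs" using assms by (simp add: sorted_wrt_iff_nth_less)
  show "set zs \<subseteq> {..<length w}" using assms by (auto simp: in_set_conv_nth)
  show "map ((!) w) zs = p" using assms by (intro nth_equalityI) auto
qed

lemma OL_D:
  assumes "xs \<in> OL p w"
  shows "length xs = length p"
    and "\<forall>i j. i < j \<and> j < length p \<longrightarrow> xs ! i < xs ! j"
    and "\<forall>i < length p. xs ! i < length w \<and> w ! (xs ! i) = p ! i"
proof -
  have s: "sorted_wrt (<) xs" "set xs \<subseteq> {..<length w}" "map ((!) w) xs = p"
    using assms by (auto simp: OL_def)
  show l: "length xs = length p" using s(3) by auto
  show "\<forall>i j. i < j \<and> j < length p \<longrightarrow> xs ! i < xs ! j"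
    using s(1) l by (simp add: sorted_wrt_iff_nth_less)
  show "\<forall>i < length p. xs ! i < length w \<and> w ! (xs ! i) = p ! i"
  proof (intro allI impI conjI)
    fix i assume i: "i < length p"
    then have "xs ! i \<in> set xs" using l by simp
    then show "xs ! i < length w" using s(2) by auto
    show "w ! (xs ! i) = p ! i" using s(3) i l nth_map by metis
  qed
qed

lemma key:
  fixes p w :: "bool list" and xs ys :: "nat list"
  assumes R: "\<forall>t<length p. (0 < t \<and> p ! (t - 1) = p ! t) \<or> (Suc t < length p \<and> p ! Suc t = p ! t)"
    and X: "xs \<in> OL p w" and Y: "ys \<in> OL p w" and ne: "xs \<noteq> ys"
  shows "\<exists>A B C. A \<in> OL p w \<and> B \<in> OL p w \<and> C \<in> OL p w \<and> A \<noteq> B \<and> A \<noteq> C \<and> B \<noteq> C"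
proof -
  let ?l = "length p"
  note X1 = OL_D[OF X] and Y1 = OL_D[OF Y]
  obtain t where t: "t < ?l" "xs ! t \<noteq> ys ! t"
    using ne X1(1) Y1(1) nth_equalityI by metis
  obtain a where a: "Suc a < ?l" "p ! a = p ! Suc a" "t = a \<or> t = Suc a"
  proof -
    from R t(1) have "(0 < t \<and> p ! (t - 1) = p ! t) \<or> (Suc t < length p \<and> p ! Suc t = p ! t)"
      by blast
    then show ?thesis
    proof
      assume h: "0 < t \<and> p ! (t - 1) = p ! t"
      show ?thesis using that[of "t - 1"] h t(1) by simp
    next
      assume h: "Suc t < length p \<and> p ! Suc t = p ! t"
      show ?thesis using that[of t] h by simp
    qed
  qed
  define L where "L i = min (xs ! i) (ys ! i)" for i
  define U where "U i = max (xs ! i) (ys ! i)" for i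
  have Lmono: "\<And>i j. i < j \<Longrightarrow> j < ?l \<Longrightarrow> L i < L j"
  proof -
    fix i j assume "i < j" "j < ?l"
    then have "xs ! i < xs ! j" "ys ! i < ys ! j" using X1(2) Y1(2) by blast+
    then show "L i < L j" unfolding L_def by linarith
  qed
  have Umono: "\<And>i j. i < j \<Longrightarrow> j < ?l \<Longrightarrow> U i < U j"
  proof -
    fix i j assume "i < j" "j < ?l"
    then have "xs ! i < xs ! j" "ys ! i < ys ! j" using X1(2) Y1(2) by blast+
    then show "U i < U j" unfolding U_def by linarith
  qed
  have LU: "\<And>i. L i \<le> U i" unfolding L_def U_def by simp
  have Ub: "\<And>i. i < ?l \<Longrightarrow> U i < length w"
    unfolding U_def using X1(3) Y1(3) by simp
  have Lb: "\<And>i. i < ?l \<Longrightarrow> L i < length w"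
    unfolding L_def using X1(3) Y1(3) by (simp add: min_less_iff_disj)
  have Lw: "\<And>i. i < ?l \<Longrightarrow> w ! L i = p ! i"
    unfolding L_def using X1(3) Y1(3) by (simp add: min_def)
  have Uw: "\<And>i. i < ?l \<Longrightarrow> w ! U i = p ! i"
    unfolding U_def using X1(3) Y1(3) by (simp add: max_def)
  define mk where "mk u v = map (\<lambda>i. if i < a then L i else if i = a then u else if i = Suc a then v else U i) [0..<?l]" for u v
  have mkOL: "mk u v \<in> OL p w" if uv: "u < v" "L a \<le> u" "v \<le> U (Suc a)" "w ! u = p ! a" "w ! v = p ! a"
     "u < length w" "v < length w" for u v
  proof (rule OL_intro)
    show "length (mk u v) = ?l" by (simp add: mk_def)
    show "\<forall>i j. i < j \<and> j < ?l \<longrightarrow> mk u v ! i < mk u v ! j"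
    proof (intro allI impI)
      fix i j assume ij: "i < j \<and> j < ?l"
      have A: "\<And>i. i < a \<Longrightarrow> L i < u" using Lmono uv(2) a(1) by (meson le_less_trans less_le_trans less_trans Suc_lessD)
      have Bv: "\<And>j. Suc a < j \<Longrightarrow> j < ?l \<Longrightarrow> v < U j" using Umono uv(3) by (meson le_less_trans)
      have C: "\<And>i j. i < j \<Longrightarrow> j < ?l \<Longrightarrow> L i < U j" using LU Umono by (meson le_less_trans)
      have A2: "\<And>i. i < a \<Longrightarrow> L i < v" using A uv(1) less_trans by blast
      have Bu: "\<And>j. Suc a < j \<Longrightarrow> j < ?l \<Longrightarrow> u < U j" using Bv uv(1) less_trans by blast
      show "mk u v ! i < mk u v ! j"
        using ij A A2 Bu Bv C Lmono Umono uv(1) a(1) unfolding mk_def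
        by (auto simp: nth_append)
    qed
    show "\<forall>i<?l. mk u v ! i < length w \<and> w ! (mk u v ! i) = p ! i"
      using Lb Ub Lw Uw uv a unfolding mk_def by auto
  qed
  have mka: "mk u v ! a = u" "mk u v ! Suc a = v" for u v using a(1) by (auto simp: mk_def)
  have mkinj: "mk u v \<noteq> mk u' v'" if "(u, v) \<noteq> (u', v')" for u v u' v'
    using that mka by metis
  define al where "al = L a"
  define be where "be = L (Suc a)"
  define ga where "ga = U a"
  define de where "de = U (Suc a)"
  have o: "al < be" "ga < de" "al \<le> ga" "be \<le> de" "al < ga \<or> be < de"
    using Lmono Umono LU a t(2) unfolding al_def be_def ga_def de_def L_def U_def
    by (auto simp: min_def max_def)
  have wv: "w ! al = p ! a" "w ! be = p ! a" "w ! ga = p ! a" "w ! de = p ! a"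
    using Lw Uw a unfolding al_def be_def ga_def de_def by auto
  have lv: "al < length w" "be < length w" "ga < length w" "de < length w"
    using Lb Ub a unfolding al_def be_def ga_def de_def by auto
  have lo: "L a = al" "U (Suc a) = de" unfolding al_def de_def by auto
  have M: "mk u v \<in> OL p w" if "u < v" "u \<in> {al, be, ga, de}" "v \<in> {al, be, ga, de}" for u v
    apply (rule mkOL)
    using that o wv lv lo by auto
  show ?thesis
  proof (cases "al < ga")
    case True
    show ?thesis
    proof (cases "be = de")
      case True
      then show ?thesis using \<open>al < ga\<close> o
        by (intro exI[of _ "mk al be"] exI[of _ "mk ga be"] exI[of _ "mk al ga"])
          (auto intro!: M mkinj)
    next
      case False
      then show ?thesis using \<open>al < ga\<close> o
        by (intro exI[of _ "mk al be"] exI[of _ "mk al de"] exI[of _ "mk ga de"])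
          (auto intro!: M mkinj)
    qed
  next
    case False
    then show ?thesis using o
      by (intro exI[of _ "mk al be"] exI[of _ "mk al de"] exI[of _ "mk be de"])
        (auto intro!: M mkinj)
  qed
qed

lemma three:
  assumes R: "\<forall>t<length p. (0 < t \<and> p ! (t - 1) = p ! t) \<or> (Suc t < length p \<and> p ! Suc t = p ! t)"
    and X: "xs \<in> OL p w" and Y: "ys \<in> OL p w" and ne: "xs \<noteq> ys"
  shows "occ p w \<ge> 3"
proof -
  obtain A B C where abc: "A \<in> OL p w" "B \<in> OL p w" "C \<in> OL p w" "A \<noteq> B" "A \<noteq> C" "B \<noteq> C"
    using key[OF R X Y ne] by blast
  have "card {A, B, C} = 3" using abc by auto
  moreover have "card {A, B, C} \<le> card (OL p w)"
    using abc OL_fin by (intro card_mono) auto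
  ultimately show ?thesis by (simp add: occ_eq)
qed

lemma no2:
  assumes R: "\<forall>t<length p. (0 < t \<and> p ! (t - 1) = p ! t) \<or> (Suc t < length p \<and> p ! Suc t = p ! t)"
  shows "occ p w \<noteq> 2"
proof
  assume "occ p w = 2"
  then have "card (OL p w) = 2" by (simp add: occ_eq)
  then obtain x y where "OL p w = {x, y}" "x \<noteq> y" by (meson card_2_iff)
  then have "occ p w \<ge> 3" using three[OF R, of x w y] by auto
  with \<open>occ p w = 2\<close> show False by simp
qed

lemma finW: "finite {w :: bool list. length w = n \<and> P w}"
proof -
  have "finite {w :: bool list. set w \<subseteq> UNIV \<and> length w = n}"
    by (rule finite_lists_length_eq) simp
  then show ?thesis by (rule finite_subset[rotated]) auto
qed

theorem mainTheorem11:
  fixes p :: "bool list" and n :: nat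
  assumes "p \<noteq> []"
    and "\<forall>i j. is_run p i j \<longrightarrow> j - i \<ge> 2"
    and "n \<ge> length p + 1"
  shows "internal_zero p n"
proof -
  let ?l = "length p"
  have R: "\<forall>t<length p. (0 < t \<and> p ! (t - 1) = p ! t) \<or> (Suc t < length p \<and> p ! Suc t = p ! t)"
  proof (intro allI impI)
    fix t assume t: "t < ?l"
    show "(0 < t \<and> p ! (t - 1) = p ! t) \<or> (Suc t < length p \<and> p ! Suc t = p ! t)"
    proof (rule ccontr)
      assume h: "\<not> ?thesis"
      have m: "\<forall>m. t \<le> m \<and> m < Suc t \<longrightarrow> p ! m = p ! t"
        using le_less_Suc_eq by blast
      have h1: "t = 0 \<or> p ! (t - 1) \<noteq> p ! t"
      proof (cases "t = 0")
        case False
        then have "0 < t" by simp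
        with h show ?thesis by blast
      qed simp
      have h2: "Suc t = length p \<or> p ! Suc t \<noteq> p ! t"
      proof (cases "Suc t = length p")
        case False
        then have "Suc t < length p" using t by simp
        with h show ?thesis by blast
      qed simp
      have "is_run p t (Suc t)" unfolding is_run_def
      proof (intro conjI)
        show "t < Suc t" by simp
        show "Suc t \<le> length p" using t by simp
        show "\<forall>m. t \<le> m \<and> m < Suc t \<longrightarrow> p ! m = p ! t" by (fact m)
        show "t = 0 \<or> p ! (t - 1) \<noteq> p ! t" by (fact h1)
        show "Suc t = length p \<or> p ! Suc t \<noteq> p ! t" by (fact h2)
      qed
      then have "Suc t - t \<ge> 2" using assms(2) by blast
      then show False by simp
    qed
  qed
  have l0: "0 < ?l" using assms(1) by simp
  define w0 where "w0 = replicate n (\<not> hd p)"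
  have "OL p w0 = {}"
  proof (rule ccontr)
    assume "OL p w0 \<noteq> {}"
    then obtain xs where xs: "xs \<in> OL p w0" by blast
    have "xs ! 0 < length w0 \<and> w0 ! (xs ! 0) = p ! 0" using OL_D(3)[OF xs] l0 by blast
    then have "xs ! 0 < n" "replicate n (\<not> p ! 0) ! (xs ! 0) = p ! 0"
      using assms(1) by (simp_all add: w0_def hd_conv_nth)
    then show False by simp
  qed
  then have o0: "occ p w0 = 0" by (simp add: occ_eq)
  have B0: "B n p 0 \<noteq> 0"
  proof -
    have "w0 \<in> {w. length w = n \<and> occ p w = 0}" using o0 by (simp add: w0_def)
    then show ?thesis unfolding B_def using finW[of n "\<lambda>w. occ p w = 0"]
      by (metis card_0_eq empty_iff)
  qed
  have B2: "B n p 2 = 0"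
  proof -
    have E: "{w :: bool list. length w = n \<and> occ p w = 2} = {}" using no2[OF R] by auto
    show ?thesis unfolding B_def E by (rule card.empty)
  qed
  define w1 where "w1 = hd p # p @ replicate (n - ?l - 1) True"
  have lw1: "length w1 = n" using assms(3) by (simp add: w1_def)
  have w1S: "w1 ! Suc i = p ! i" if "i < ?l" for i using that by (simp add: w1_def nth_append)
  have w10: "w1 ! 0 = p ! 0" using assms(1) by (simp add: w1_def hd_conv_nth)
  define xs1 where "xs1 = map Suc [0..<?l]"
  define xs2 where "xs2 = map (\<lambda>i. if i = 0 then 0 else Suc i) [0..<?l]"
  have X1: "xs1 \<in> OL p w1"
    by (rule OL_intro) (use lw1 w1S assms(3) in \<open>auto simp: xs1_def\<close>)
  have X2: "xs2 \<in> OL p w1"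
    by (rule OL_intro) (use lw1 w1S w10 assms(3) in \<open>auto simp: xs2_def\<close>)
  have "xs1 ! 0 \<noteq> xs2 ! 0" using l0 by (simp add: xs1_def xs2_def)
  then have "xs1 \<noteq> xs2" by metis
  then have o3: "occ p w1 \<ge> 3" using three[OF R X1 X2] by simp
  have B3: "B n p (occ p w1) \<noteq> 0"
  proof -
    have "w1 \<in> {w. length w = n \<and> occ p w = occ p w1}" using lw1 by simp
    then show ?thesis unfolding B_def using finW[of n "\<lambda>w. occ p w = occ p w1"]
      by (metis card_0_eq empty_iff)
  qed
  show ?thesis unfolding internal_zero_def
    using B0 B2 B3 o3 by (intro exI[of _ 0] exI[of _ 2] exI[of _ "occ p w1"]) auto
qed

end
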